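(* Let $\mathcal E_i\equiv 1\to H_i\xrightarrow{\alpha_i}G_i\xrightarrow{\beta_i}K_i\to1$ ($i=1,2$) be central extensions of multiplicative Lie algebras and $(\lambda,\mu,\nu)$ a morphism from $\mathcal E_1$ to $\mathcal E_2$. Then $(\lambda,\mu,\nu)$ is an isoclinic morphism if and only if $\nu$ is a multiplicative Lie algebra isomorphism and $\ker\mu\cap{}^M[G_1,G_1]=1$.
   Context: A multiplicative Lie algebra is a group $(G,\cdot)$ with a binary operation $\star$ such that for all $x,y,z\in G$: $x\star x=1$; $x\star(yz)=(x\star y)\,{}^y(x\star z)$; $(xy)\star z={}^x(y\star z)(x\star z)$; $((x\star y)\star{}^yz)((y\star z)\star{}^zx)((z\star x)\star{}^xy)=1$; ${}^z(x\star y)={}^zx\star{}^zy$, where ${}^xy=xyx^{-1}$. Homomorphisms preserve both operations. $Z(G)$ is the group center, $LZ(G)=\{x: x\star y=1\ \forall y\}$, $\mathcal Z(G)=LZ(G)\cap Z(G)$; $[x,y]$ is the group commutator; ${}^M[G,G]=(G\star G)[G,G]$ where $G\star G$ is the ideal generated by all $a\star b$. A central extension is a short exact sequence $1\to H\xrightarrow{\alpha}G\xrightarrow{\beta}K\to1$ of multiplicative Lie algebras with $\alpha(H)\subseteq\mathcal Z(G)$. A morphism $(\lambda,\mu,\nu)$ from $\mathcal E_1$ to $\mathcal E_2$ consists of homomorphisms $\lambda:H_1\to H_2$, $\mu:G_1\to G_2$, $\nu:K_1\to K_2$ with $\mu\alpha_1=\alpha_2\lambda$ and $\beta_2\mu=\nu\beta_1$.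 An isoclinism between $\mathcal E_1,\mathcal E_2$ is a pair of isomorphisms $\lambda':K_1\to K_2$, $\mu':{}^M[G_1,G_1]\to{}^M[G_2,G_2]$ such that $\mu'([g,g'])=[h,h']$ and $\mu'(g\star g')=h\star h'$ whenever $g,g'\in G_1$, $h,h'\in G_2$ satisfy $\beta_2(h)=\lambda'\beta_1(g)$, $\beta_2(h')=\lambda'\beta_1(g')$. A morphism $(\lambda,\mu,\nu)$ is an isoclinic morphism if $(\nu,\mu|_{{}^M[G_1,G_1]})$ is an isoclinism between $\mathcal E_1$ and $\mathcal E_2$. *)

theory Defs
  imports "HOL-Algebra.Algebra"
begin

record 'a mla = "'a monoid" + star :: "'a \<Rightarrow> 'a \<Rightarrow> 'a"

definition mconj :: "('a, 'm) monoid_scheme \<Rightarrow> 'a \<Rightarrow> 'a \<Rightarrow> 'a" where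
  "mconj G x y = x \<otimes>\<^bsub>G\<^esub> y \<otimes>\<^bsub>G\<^esub> inv\<^bsub>G\<^esub> x"

definition mult_lie_alg :: "'a mla \<Rightarrow> bool" where
  "mult_lie_alg G \<longleftrightarrow> group G \<and>
    (\<forall>x\<in>carrier G. \<forall>y\<in>carrier G. star G x y \<in> carrier G) \<and>
    (\<forall>x\<in>carrier G. star G x x = \<one>\<^bsub>G\<^esub>) \<and>
    (\<forall>x\<in>carrier G. \<forall>y\<in>carrier G. \<forall>z\<in>carrier G.
       star G x (y \<otimes>\<^bsub>G\<^esub> z) = star G x y \<otimes>\<^bsub>G\<^esub> mconj G y (star G x z)) \<and>
    (\<forall>x\<in>carrier G. \<forall>y\<in>carrier G. \<forall>z\<in>carrier G.
       star G (x \<otimes>\<^bsub>G\<^esub> y) z = mconj G x (star G y z) \<otimes>\<^bsub>G\<^esub> star G x z) \<and>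
    (\<forall>x\<in>carrier G. \<forall>y\<in>carrier G. \<forall>z\<in>carrier G.
       star G (star G x y) (mconj G y z) \<otimes>\<^bsub>G\<^esub> star G (star G y z) (mconj G z x)
         \<otimes>\<^bsub>G\<^esub> star G (star G z x) (mconj G x y) = \<one>\<^bsub>G\<^esub>) \<and>
    (\<forall>x\<in>carrier G. \<forall>y\<in>carrier G. \<forall>z\<in>carrier G.
       mconj G z (star G x y) = star G (mconj G z x) (mconj G z y))"

definition mla_hom :: "'a mla \<Rightarrow> 'b mla \<Rightarrow> ('a \<Rightarrow> 'b) set" where
  "mla_hom G H = {f. f \<in> hom G H \<and>
     (\<forall>x\<in>carrier G. \<forall>y\<in>carrier G. f (star G x y) = star H (f x) (f y))}"

definition mla_iso :: "'a mla \<Rightarrow> 'b mla \<Rightarrow> ('a \<Rightarrow> 'b) set" where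
  "mla_iso G H = {f. f \<in> mla_hom G H \<and> bij_betw f (carrier G) (carrier H)}"

definition mla_iso_on :: "'a mla \<Rightarrow> 'a set \<Rightarrow> 'b mla \<Rightarrow> 'b set \<Rightarrow> ('a \<Rightarrow> 'b) \<Rightarrow> bool" where
  "mla_iso_on G A H B f \<longleftrightarrow> bij_betw f A B \<and>
     (\<forall>x\<in>A. \<forall>y\<in>A. f (x \<otimes>\<^bsub>G\<^esub> y) = f x \<otimes>\<^bsub>H\<^esub> f y) \<and>
     (\<forall>x\<in>A. \<forall>y\<in>A. f (star G x y) = star H (f x) (f y))"

definition grp_center :: "'a mla \<Rightarrow> 'a set" where
  "grp_center G = {x \<in> carrier G. \<forall>y\<in>carrier G. x \<otimes>\<^bsub>G\<^esub> y = y \<otimes>\<^bsub>G\<^esub> x}"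

definition lie_center :: "'a mla \<Rightarrow> 'a set" where
  "lie_center G = {x \<in> carrier G. \<forall>y\<in>carrier G. star G x y = \<one>\<^bsub>G\<^esub>}"

definition mla_center :: "'a mla \<Rightarrow> 'a set" where
  "mla_center G = lie_center G \<inter> grp_center G"

definition mla_ideal :: "'a mla \<Rightarrow> 'a set \<Rightarrow> bool" where
  "mla_ideal G I \<longleftrightarrow> I \<lhd> G \<and>
     (\<forall>x\<in>I. \<forall>y\<in>carrier G. star G x y \<in> I \<and> star G y x \<in> I)"

text \<open>G \<star> G: the ideal generated by all a \<star> b.\<close>
definition star_ideal :: "'a mla \<Rightarrow> 'a set" where
  "star_ideal G = \<Inter>{I. mla_ideal G I \<and>
      {star G a b | a b. a \<in> carrier G \<and> b \<in> carrier G} \<subseteq> I}"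

text \<open>{}^M[G,G] = (G \<star> G)[G,G].\<close>
definition mcomm :: "'a mla \<Rightarrow> 'a set" where
  "mcomm G = star_ideal G <#>\<^bsub>G\<^esub> derived G (carrier G)"

definition gcomm :: "'a mla \<Rightarrow> 'a \<Rightarrow> 'a \<Rightarrow> 'a" where
  "gcomm G x y = x \<otimes>\<^bsub>G\<^esub> y \<otimes>\<^bsub>G\<^esub> inv\<^bsub>G\<^esub> x \<otimes>\<^bsub>G\<^esub> inv\<^bsub>G\<^esub> y"

definition central_extension :: "'h mla \<Rightarrow> 'g mla \<Rightarrow> 'k mla \<Rightarrow> ('h \<Rightarrow> 'g) \<Rightarrow> ('g \<Rightarrow> 'k) \<Rightarrow> bool" where
  "central_extension H G K \<alpha> \<beta> \<longleftrightarrow>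
     mult_lie_alg H \<and> mult_lie_alg G \<and> mult_lie_alg K \<and>
     \<alpha> \<in> mla_hom H G \<and> \<beta> \<in> mla_hom G K \<and>
     inj_on \<alpha> (carrier H) \<and> \<beta> ` carrier G = carrier K \<and>
     \<alpha> ` carrier H = kernel G K \<beta> \<and>
     \<alpha> ` carrier H \<subseteq> mla_center G"

definition ext_morphism ::
  "'h1 mla \<Rightarrow> 'g1 mla \<Rightarrow> 'k1 mla \<Rightarrow> ('h1 \<Rightarrow> 'g1) \<Rightarrow> ('g1 \<Rightarrow> 'k1) \<Rightarrow>
   'h2 mla \<Rightarrow> 'g2 mla \<Rightarrow> 'k2 mla \<Rightarrow> ('h2 \<Rightarrow> 'g2) \<Rightarrow> ('g2 \<Rightarrow> 'k2) \<Rightarrow>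
   ('h1 \<Rightarrow> 'h2) \<Rightarrow> ('g1 \<Rightarrow> 'g2) \<Rightarrow> ('k1 \<Rightarrow> 'k2) \<Rightarrow> bool" where
  "ext_morphism H1 G1 K1 \<alpha>1 \<beta>1 H2 G2 K2 \<alpha>2 \<beta>2 lam mu nu \<longleftrightarrow>
     lam \<in> mla_hom H1 H2 \<and> mu \<in> mla_hom G1 G2 \<and> nu \<in> mla_hom K1 K2 \<and>
     (\<forall>h\<in>carrier H1. mu (\<alpha>1 h) = \<alpha>2 (lam h)) \<and>
     (\<forall>g\<in>carrier G1. \<beta>2 (mu g) = nu (\<beta>1 g))"

text \<open>An isoclinism (lam', mu'); mu' is only used on {}^M[G1,G1].\<close>
definition isoclinism ::
  "'g1 mla \<Rightarrow> 'k1 mla \<Rightarrow> ('g1 \<Rightarrow> 'k1) \<Rightarrow>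
   'g2 mla \<Rightarrow> 'k2 mla \<Rightarrow> ('g2 \<Rightarrow> 'k2) \<Rightarrow>
   ('k1 \<Rightarrow> 'k2) \<Rightarrow> ('g1 \<Rightarrow> 'g2) \<Rightarrow> bool" where
  "isoclinism G1 K1 \<beta>1 G2 K2 \<beta>2 lam' mu' \<longleftrightarrow>
     lam' \<in> mla_iso K1 K2 \<and>
     mla_iso_on G1 (mcomm G1) G2 (mcomm G2) mu' \<and>
     (\<forall>g\<in>carrier G1. \<forall>g'\<in>carrier G1. \<forall>h\<in>carrier G2. \<forall>h'\<in>carrier G2.
        \<beta>2 h = lam' (\<beta>1 g) \<longrightarrow> \<beta>2 h' = lam' (\<beta>1 g') \<longrightarrow>
        mu' (gcomm G1 g g') = gcomm G2 h h' \<and> mu' (star G1 g g') = star G2 h h')"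

definition isoclinic_morphism ::
  "'g1 mla \<Rightarrow> 'k1 mla \<Rightarrow> ('g1 \<Rightarrow> 'k1) \<Rightarrow>
   'g2 mla \<Rightarrow> 'k2 mla \<Rightarrow> ('g2 \<Rightarrow> 'k2) \<Rightarrow>
   ('g1 \<Rightarrow> 'g2) \<Rightarrow> ('k1 \<Rightarrow> 'k2) \<Rightarrow> bool" where
  "isoclinic_morphism G1 K1 \<beta>1 G2 K2 \<beta>2 mu nu \<longleftrightarrow>
     isoclinism G1 K1 \<beta>1 G2 K2 \<beta>2 nu (restrict mu (mcomm G1))"

end

theory Submission
  imports Defs "HOL-Algebra.SndIsomorphismGrp"
begin

locale mlaL = fixes G :: "'a mla" (structure) assumes mla: "mult_lie_alg G"
begin
sublocale group G using mla unfolding mult_lie_alg_def by blast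

lemma star_closed[simp]: "x \<in> carrier G \<Longrightarrow> y \<in> carrier G \<Longrightarrow> star G x y \<in> carrier G"
  using mla unfolding mult_lie_alg_def by blast
lemma star_self: "x \<in> carrier G \<Longrightarrow> star G x x = \<one>"
  using mla unfolding mult_lie_alg_def by blast
lemma star_mult_r: "x \<in> carrier G \<Longrightarrow> y \<in> carrier G \<Longrightarrow> z \<in> carrier G \<Longrightarrow>
   star G x (y \<otimes> z) = star G x y \<otimes> mconj G y (star G x z)"
  using mla unfolding mult_lie_alg_def by blast
lemma star_mult_l: "x \<in> carrier G \<Longrightarrow> y \<in> carrier G \<Longrightarrow> z \<in> carrier G \<Longrightarrow>
   star G (x \<otimes> y) z = mconj G x (star G y z) \<otimes> star G x z"
  using mla unfolding mult_lie_alg_def by blast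

lemma mconj_closed[simp]: "x \<in> carrier G \<Longrightarrow> y \<in> carrier G \<Longrightarrow> mconj G x y \<in> carrier G"
  unfolding mconj_def by simp
lemma mconj_one[simp]: "x \<in> carrier G \<Longrightarrow> mconj G x \<one> = \<one>"
  unfolding mconj_def by simp

lemma inv_cancel_l[simp]: "x \<in> carrier G \<Longrightarrow> c \<in> carrier G \<Longrightarrow> inv x \<otimes> (x \<otimes> c) = c"
  by (simp add: m_assoc[symmetric])
lemma inv_cancel_r[simp]: "x \<in> carrier G \<Longrightarrow> c \<in> carrier G \<Longrightarrow> x \<otimes> (inv x \<otimes> c) = c"
  by (simp add: m_assoc[symmetric])

lemma star_anti: assumes x: "x \<in> carrier G" and y: "y \<in> carrier G"
  shows "star G y x \<otimes> star G x y = \<one>"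
proof -
  have "\<one> = star G (x \<otimes> y) (x \<otimes> y)" using star_self x y by simp
  also have "\<dots> = mconj G x (star G y (x \<otimes> y)) \<otimes> star G x (x \<otimes> y)"
    using star_mult_l x y by simp
  also have "star G y (x \<otimes> y) = star G y x"
    using star_mult_r[of y x y] x y star_self by simp
  also have "star G x (x \<otimes> y) = mconj G x (star G x y)"
    using star_mult_r[of x x y] x y star_self by simp
  finally have e: "\<one> = mconj G x (star G y x) \<otimes> mconj G x (star G x y)" .
  have "mconj G x (star G y x) \<otimes> mconj G x (star G x y) = mconj G x (star G y x \<otimes> star G x y)"
    unfolding mconj_def using x y by (simp add: m_assoc)
  with e have "\<one> = mconj G x (star G y x \<otimes> star G x y)" by simp
  hence "inv x \<otimes> \<one> \<otimes> x = inv x \<otimes> mconj G x (star G y x \<otimes> star G x y) \<otimes> x" by simp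
  thus ?thesis unfolding mconj_def using x y by (simp add: m_assoc)
qed

lemma star_lie_center_r: "x \<in> carrier G \<Longrightarrow> z \<in> lie_center G \<Longrightarrow> star G x z = \<one>"
  using star_anti[of x z] unfolding lie_center_def by auto

lemma star_central: assumes "a \<in> carrier G" "b \<in> carrier G" "z \<in> mla_center G" "w \<in> mla_center G"
  shows "star G (a \<otimes> z) (b \<otimes> w) = star G a b"
proof -
  have zc: "z \<in> carrier G" "w \<in> carrier G" "z \<in> lie_center G" "w \<in> lie_center G"
    using assms(3,4) unfolding mla_center_def lie_center_def by auto
  have "star G (a \<otimes> z) (b \<otimes> w) = star G a (b \<otimes> w)"
    using star_mult_l[of a z "b \<otimes> w"] assms zc unfolding lie_center_def by simp
  also have "\<dots> = star G a b" using star_mult_r[of a b w] assms zc star_lie_center_r by simp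
  finally show ?thesis .
qed

lemma gcomm_central: assumes a: "a \<in> carrier G" and b: "b \<in> carrier G"
  and z: "z \<in> mla_center G" and w: "w \<in> mla_center G"
  shows "gcomm G (a \<otimes> z) (b \<otimes> w) = gcomm G a b"
proof -
  have zc: "z \<in> carrier G" "w \<in> carrier G" "\<And>y. y \<in> carrier G \<Longrightarrow> z \<otimes> y = y \<otimes> z"
     "\<And>y. y \<in> carrier G \<Longrightarrow> w \<otimes> y = w \<otimes> y"
    using z w unfolding mla_center_def grp_center_def by auto
  have wc: "\<And>y. y \<in> carrier G \<Longrightarrow> w \<otimes> y = y \<otimes> w"
    using w unfolding mla_center_def grp_center_def by auto
  have "gcomm G (a \<otimes> z) (b \<otimes> w) = a \<otimes> (z \<otimes> (b \<otimes> w \<otimes> inv z)) \<otimes> inv a \<otimes> inv (b \<otimes> w)"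
    unfolding gcomm_def using a b zc(1,2) by (simp add: m_assoc inv_mult_group)
  also have "z \<otimes> (b \<otimes> w \<otimes> inv z) = b \<otimes> w"
    proof -
    have "z \<otimes> (b \<otimes> w \<otimes> inv z) = (z \<otimes> (b \<otimes> w)) \<otimes> inv z" using zc b by (simp add: m_assoc)
    also have "\<dots> = (b \<otimes> w) \<otimes> z \<otimes> inv z" using zc(3)[of "b \<otimes> w"] zc b by simp
    also have "\<dots> = b \<otimes> w" using zc b by (simp add: m_assoc)
    finally show ?thesis .
  qed
  also have "a \<otimes> (b \<otimes> w) \<otimes> inv a \<otimes> inv (b \<otimes> w) = a \<otimes> b \<otimes> (w \<otimes> (inv a \<otimes> inv w)) \<otimes> inv b"
    using a b zc(1,2) by (simp add: m_assoc inv_mult_group)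
  also have "w \<otimes> (inv a \<otimes> inv w) = inv a"
    proof -
    have "w \<otimes> (inv a \<otimes> inv w) = (w \<otimes> inv a) \<otimes> inv w" using zc a by (simp add: m_assoc)
    also have "\<dots> = inv a \<otimes> w \<otimes> inv w" using wc[of "inv a"] zc a by simp
    also have "\<dots> = inv a" using zc a by (simp add: m_assoc)
    finally show ?thesis .
  qed
  finally show ?thesis unfolding gcomm_def .
qed

abbreviation "stars \<equiv> {star G a b | a b. a \<in> carrier G \<and> b \<in> carrier G}"

lemma carrier_ideal: "mla_ideal G (carrier G)"
  unfolding mla_ideal_def using normal_inv_iff subgroup_self by auto

lemma center_carrier: "z \<in> mla_center G \<Longrightarrow> z \<in> carrier G"
  unfolding mla_center_def lie_center_def by auto

lemma one_center: "\<one> \<in> mla_center G"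
proof -
  have "star G \<one> y = \<one>" if y: "y \<in> carrier G" for y
  proof -
    have "star G \<one> y \<otimes> star G \<one> y = star G \<one> y \<otimes> \<one>"
      using star_mult_l[of \<one> \<one> y] y unfolding mconj_def by simp
    thus ?thesis using y l_cancel[of "star G \<one> y" "star G \<one> y" \<one>] by simp
  qed
  thus ?thesis unfolding mla_center_def lie_center_def grp_center_def by auto
qed

lemma star_central_r: "a \<in> carrier G \<Longrightarrow> b \<in> carrier G \<Longrightarrow> w \<in> mla_center G \<Longrightarrow>
   star G a (b \<otimes> w) = star G a b"
  using star_central[of a b \<one> w] one_center by simp

lemma star_central_l: "a \<in> carrier G \<Longrightarrow> b \<in> carrier G \<Longrightarrow> w \<in> mla_center G \<Longrightarrow>
   star G (a \<otimes> w) b = star G a b"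
  using star_central[of a b w \<one>] one_center by simp

lemma conj_central: assumes a: "a \<in> carrier G" and h: "h \<in> carrier G" and z: "z \<in> mla_center G"
  shows "a \<otimes> z \<otimes> h \<otimes> inv (a \<otimes> z) = a \<otimes> h \<otimes> inv a"
proof -
  have zc: "z \<in> carrier G" "\<And>y. y \<in> carrier G \<Longrightarrow> z \<otimes> y = y \<otimes> z"
    using z unfolding mla_center_def grp_center_def by auto
  have "a \<otimes> z \<otimes> h \<otimes> inv (a \<otimes> z) = a \<otimes> ((z \<otimes> h) \<otimes> inv z) \<otimes> inv a"
    using a h zc(1) by (simp add: m_assoc inv_mult_group)
  also have "(z \<otimes> h) \<otimes> inv z = h" using zc h by (simp add: m_assoc)
  finally show ?thesis .
qed

lemma star_ideal_sub: "star_ideal G \<subseteq> carrier G"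
  unfolding star_ideal_def using carrier_ideal by auto

lemma star_ideal_least: "mla_ideal G I \<Longrightarrow> stars \<subseteq> I \<Longrightarrow> star_ideal G \<subseteq> I"
  unfolding star_ideal_def by auto

lemma star_in: "a \<in> carrier G \<Longrightarrow> b \<in> carrier G \<Longrightarrow> star G a b \<in> star_ideal G"
  unfolding star_ideal_def by blast

lemma star_ideal_ideal: "mla_ideal G (star_ideal G)"
proof -
  let ?F = "{I. mla_ideal G I \<and> stars \<subseteq> I}"
  have sg: "subgroup (star_ideal G) G"
    unfolding star_ideal_def
  proof (rule subgroups_Inter)
    show "?F \<noteq> {}" using carrier_ideal by auto
  next
    fix I assume "I \<in> ?F" thus "subgroup I G" unfolding mla_ideal_def using normal_imp_subgroup by blast
  qed
  have "\<forall>x\<in>carrier G. \<forall>h\<in>star_ideal G. x \<otimes> h \<otimes> inv x \<in> star_ideal G"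
    unfolding star_ideal_def mla_ideal_def by (auto intro: normal.inv_op_closed2)
  with sg have "star_ideal G \<lhd> G" using normal_inv_iff by blast
  moreover have "\<forall>x\<in>star_ideal G. \<forall>y\<in>carrier G. star G x y \<in> star_ideal G \<and> star G y x \<in> star_ideal G"
    using star_in star_ideal_sub by blast
  ultimately show ?thesis unfolding mla_ideal_def by blast
qed

lemma star_ideal_normal: "star_ideal G \<lhd> G"
  using star_ideal_ideal unfolding mla_ideal_def by blast

lemma derived_sg: "subgroup (derived G (carrier G)) G"
  by (rule derived_is_subgroup) simp

lemma mcomm_sg: "subgroup (mcomm G) G"
proof -
  interpret second_isomorphism_grp "star_ideal G" G "derived G (carrier G)"
    by (intro second_isomorphism_grp.intro star_ideal_normal second_isomorphism_grp_axioms.intro derived_sg)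
  show ?thesis unfolding mcomm_def by (rule normal_set_mult_subgroup)
qed

lemma star_ideal_mcomm: "star_ideal G \<subseteq> mcomm G"
proof
  fix x assume x: "x \<in> star_ideal G"
  hence "x = x \<otimes> \<one>" using star_ideal_sub by auto
  moreover have "\<one> \<in> derived G (carrier G)" using derived_sg subgroup.one_closed by blast
  ultimately show "x \<in> mcomm G" unfolding mcomm_def set_mult_def using x by blast
qed

lemma derived_mcomm: "derived G (carrier G) \<subseteq> mcomm G"
proof
  fix x assume x: "x \<in> derived G (carrier G)"
  hence "x = \<one> \<otimes> x" using derived_sg subgroup.subset by fastforce
  moreover have "\<one> \<in> star_ideal G" using star_ideal_normal normal_imp_subgroup subgroup.one_closed by blast
  ultimately show "x \<in> mcomm G" unfolding mcomm_def set_mult_def using x by blast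
qed

lemma gcomm_mcomm: "a \<in> carrier G \<Longrightarrow> b \<in> carrier G \<Longrightarrow> gcomm G a b \<in> mcomm G"
  using derived_mcomm unfolding derived_def gcomm_def by (blast intro: generate.incl)

lemma star_mcomm: "a \<in> carrier G \<Longrightarrow> b \<in> carrier G \<Longrightarrow> star G a b \<in> mcomm G"
  using star_ideal_mcomm star_in by blast

lemma mcomm_sub: "mcomm G \<subseteq> carrier G"
  using mcomm_sg subgroup.subset by blast


end

lemma ce_fiber:
  assumes ce: "central_extension H G K \<alpha> \<beta>" and a: "a \<in> carrier G" and b: "b \<in> carrier G"
    and e: "\<beta> a = \<beta> b"
  shows "\<exists>z\<in>mla_center G. a = b \<otimes>\<^bsub>G\<^esub> z"
proof -
  interpret g: mlaL G using ce unfolding central_extension_def by (simp add: mlaL_def)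
  interpret k: mlaL K using ce unfolding central_extension_def by (simp add: mlaL_def)
  interpret h: group_hom G K \<beta> using ce unfolding central_extension_def mla_hom_def
    by (simp add: group_hom_def group_hom_axioms_def g.group_axioms k.group_axioms)
  let ?z = "inv\<^bsub>G\<^esub> b \<otimes>\<^bsub>G\<^esub> a"
  have zc: "?z \<in> carrier G" using a b by simp
  have "\<beta> ?z = \<one>\<^bsub>K\<^esub>" using a b e by (simp add: h.hom_mult h.hom_inv)
  hence "?z \<in> kernel G K \<beta>" using zc unfolding kernel_def by simp
  hence "?z \<in> mla_center G" using ce unfolding central_extension_def by blast
  moreover have "a = b \<otimes>\<^bsub>G\<^esub> ?z" using a b by simp
  ultimately show ?thesis by blast
qed

theorem theorem4p5:
  fixes H1 :: "'h1 mla" and G1 :: "'g1 mla" and K1 :: "'k1 mla"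
    and H2 :: "'h2 mla" and G2 :: "'g2 mla" and K2 :: "'k2 mla"
    and \<alpha>1 :: "'h1 \<Rightarrow> 'g1" and \<beta>1 :: "'g1 \<Rightarrow> 'k1"
    and \<alpha>2 :: "'h2 \<Rightarrow> 'g2" and \<beta>2 :: "'g2 \<Rightarrow> 'k2"
    and lam :: "'h1 \<Rightarrow> 'h2" and mu :: "'g1 \<Rightarrow> 'g2" and nu :: "'k1 \<Rightarrow> 'k2"
  assumes "central_extension H1 G1 K1 \<alpha>1 \<beta>1"
    and "central_extension H2 G2 K2 \<alpha>2 \<beta>2"
    and "ext_morphism H1 G1 K1 \<alpha>1 \<beta>1 H2 G2 K2 \<alpha>2 \<beta>2 lam mu nu"
  shows "isoclinic_morphism G1 K1 \<beta>1 G2 K2 \<beta>2 mu nu \<longleftrightarrow>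
    (nu \<in> mla_iso K1 K2 \<and> kernel G1 G2 mu \<inter> mcomm G1 = {\<one>\<^bsub>G1\<^esub>})"
proof -
  interpret g1: mlaL G1 using assms(1) unfolding central_extension_def by (simp add: mlaL_def)
  interpret g2: mlaL G2 using assms(2) unfolding central_extension_def by (simp add: mlaL_def)
  have muhom: "mu \<in> hom G1 G2" and mustar: "\<And>x y. x \<in> carrier G1 \<Longrightarrow> y \<in> carrier G1 \<Longrightarrow>
      mu (star G1 x y) = star G2 (mu x) (mu y)"
    using assms(3) unfolding ext_morphism_def mla_hom_def by auto
  interpret m: group_hom G1 G2 mu
    using muhom by (simp add: group_hom_def group_hom_axioms_def g1.group_axioms g2.group_axioms)
  have comm_b: "\<And>g. g \<in> carrier G1 \<Longrightarrow> \<beta>2 (mu g) = nu (\<beta>1 g)"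
    using assms(3) unfolding ext_morphism_def by auto
  have fib: "\<And>g h. g \<in> carrier G1 \<Longrightarrow> h \<in> carrier G2 \<Longrightarrow> \<beta>2 h = nu (\<beta>1 g) \<Longrightarrow>
      \<exists>z\<in>mla_center G2. h = mu g \<otimes>\<^bsub>G2\<^esub> z"
    using ce_fiber[OF assms(2)] comm_b by (metis m.hom_closed)
  let ?M1 = "mcomm G1" and ?M2 = "mcomm G2"
  have one1: "\<one>\<^bsub>G1\<^esub> \<in> ?M1" using g1.mcomm_sg subgroup.one_closed by blast
  show ?thesis
  proof
    assume iso: "isoclinic_morphism G1 K1 \<beta>1 G2 K2 \<beta>2 mu nu"
    hence nuiso: "nu \<in> mla_iso K1 K2" and bij: "bij_betw (restrict mu ?M1) ?M1 ?M2"
      unfolding isoclinic_morphism_def isoclinism_def mla_iso_on_def by blast+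
    have inj: "inj_on mu ?M1"
      using bij_betw_imp_inj_on[OF bij] by (simp add: inj_on_def)
    have "kernel G1 G2 mu \<inter> ?M1 = {\<one>\<^bsub>G1\<^esub>}"
    proof
      show "kernel G1 G2 mu \<inter> ?M1 \<subseteq> {\<one>\<^bsub>G1\<^esub>}"
      proof
        fix x assume "x \<in> kernel G1 G2 mu \<inter> ?M1"
        hence "x \<in> ?M1" "mu x = mu \<one>\<^bsub>G1\<^esub>" unfolding kernel_def by auto
        thus "x \<in> {\<one>\<^bsub>G1\<^esub>}" using inj one1 by (metis inj_onD singletonI)
      qed
      show "{\<one>\<^bsub>G1\<^esub>} \<subseteq> kernel G1 G2 mu \<inter> ?M1" using one1 unfolding kernel_def by auto
    qed
    with nuiso show "nu \<in> mla_iso K1 K2 \<and> kernel G1 G2 mu \<inter> ?M1 = {\<one>\<^bsub>G1\<^esub>}" by blast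
  next
    assume R: "nu \<in> mla_iso K1 K2 \<and> kernel G1 G2 mu \<inter> ?M1 = {\<one>\<^bsub>G1\<^esub>}"
    hence nuiso: "nu \<in> mla_iso K1 K2" and ker: "kernel G1 G2 mu \<inter> ?M1 = {\<one>\<^bsub>G1\<^esub>}" by auto
    have surjnu: "nu ` carrier K1 = carrier K2"
      using nuiso unfolding mla_iso_def by (auto dest: bij_betw_imp_surj_on)
    have cover: "\<And>h. h \<in> carrier G2 \<Longrightarrow> \<exists>g\<in>carrier G1. \<exists>z\<in>mla_center G2. h = mu g \<otimes>\<^bsub>G2\<^esub> z"
    proof -
      fix h assume h: "h \<in> carrier G2"
      have "\<beta>2 h \<in> carrier K2" using h assms(2) unfolding central_extension_def by blast
      then obtain k where k: "k \<in> carrier K1" "\<beta>2 h = nu k" using surjnu by auto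
      then obtain g where g: "g \<in> carrier G1" "k = \<beta>1 g" using assms(1) unfolding central_extension_def by blast
      show "\<exists>g\<in>carrier G1. \<exists>z\<in>mla_center G2. h = mu g \<otimes>\<^bsub>G2\<^esub> z" using fib[OF g(1) h] k g by blast
    qed
    have inj: "inj_on mu ?M1"
    proof (rule inj_onI)
      fix x y assume x: "x \<in> ?M1" and y: "y \<in> ?M1" and e: "mu x = mu y"
      have xc: "x \<in> carrier G1" "y \<in> carrier G1" using x y g1.mcomm_sub by auto
      have "x \<otimes>\<^bsub>G1\<^esub> inv\<^bsub>G1\<^esub> y \<in> ?M1"
        using x y g1.mcomm_sg by (simp add: subgroup.m_closed subgroup.m_inv_closed)
      moreover have "mu (x \<otimes>\<^bsub>G1\<^esub> inv\<^bsub>G1\<^esub> y) = \<one>\<^bsub>G2\<^esub>" using xc e by simp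
      moreover have "x \<otimes>\<^bsub>G1\<^esub> inv\<^bsub>G1\<^esub> y \<in> carrier G1" using xc by simp
      ultimately have "x \<otimes>\<^bsub>G1\<^esub> inv\<^bsub>G1\<^esub> y \<in> kernel G1 G2 mu \<inter> ?M1" unfolding kernel_def by simp
      hence e1: "x \<otimes>\<^bsub>G1\<^esub> inv\<^bsub>G1\<^esub> y = \<one>\<^bsub>G1\<^esub>" using ker by simp
      have "x = (x \<otimes>\<^bsub>G1\<^esub> inv\<^bsub>G1\<^esub> y) \<otimes>\<^bsub>G1\<^esub> y" using xc by (simp add: g1.m_assoc)
      thus "x = y" using e1 xc by simp
    qed
    have S: "mu ` star_ideal G1 = star_ideal G2"
    proof
      let ?P = "{x \<in> carrier G1. mu x \<in> star_ideal G2}"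
      have SG2: "subgroup (star_ideal G2) G2" using g2.star_ideal_normal normal_imp_subgroup by blast
      have sgP: "subgroup ?P G1"
      proof (rule g1.subgroupI)
        show "?P \<noteq> {}" using SG2 subgroup.one_closed by fastforce
      qed (auto simp: subgroup.m_closed[OF SG2] subgroup.m_inv_closed[OF SG2])
      have "?P \<lhd> G1"
        unfolding g1.normal_inv_iff using sgP
        by (auto intro: normal.inv_op_closed2[OF g2.star_ideal_normal])
      moreover have "\<forall>x\<in>?P. \<forall>y\<in>carrier G1. star G1 x y \<in> ?P \<and> star G1 y x \<in> ?P"
        using mustar g2.star_ideal_ideal unfolding mla_ideal_def by auto
      ultimately have "mla_ideal G1 ?P" unfolding mla_ideal_def by blast
      moreover have "{star G1 a b | a b. a \<in> carrier G1 \<and> b \<in> carrier G1} \<subseteq> ?P"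
        using mustar g2.star_in by auto
      ultimately have "star_ideal G1 \<subseteq> ?P" by (rule g1.star_ideal_least)
      thus "mu ` star_ideal G1 \<subseteq> star_ideal G2" by auto
    next
      let ?Q = "mu ` star_ideal G1"
      have SG1: "subgroup (star_ideal G1) G1" using g1.star_ideal_normal normal_imp_subgroup by blast
      have sgQ: "subgroup ?Q G2" by (rule m.subgroup_img_is_subgroup[OF SG1])
      have "\<forall>y\<in>carrier G2. \<forall>h\<in>?Q. y \<otimes>\<^bsub>G2\<^esub> h \<otimes>\<^bsub>G2\<^esub> inv\<^bsub>G2\<^esub> y \<in> ?Q"
      proof (intro ballI)
        fix y h assume y: "y \<in> carrier G2" and h: "h \<in> ?Q"
        obtain g z where gz: "g \<in> carrier G1" "z \<in> mla_center G2" "y = mu g \<otimes>\<^bsub>G2\<^esub> z" using cover[OF y] by blast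
        obtain s where s: "s \<in> star_ideal G1" "h = mu s" using h by blast
        have sc: "s \<in> carrier G1" using s g1.star_ideal_sub by auto
        have "y \<otimes>\<^bsub>G2\<^esub> h \<otimes>\<^bsub>G2\<^esub> inv\<^bsub>G2\<^esub> y = mu (g \<otimes>\<^bsub>G1\<^esub> s \<otimes>\<^bsub>G1\<^esub> inv\<^bsub>G1\<^esub> g)"
          using gz s sc g2.conj_central by simp
        moreover have "g \<otimes>\<^bsub>G1\<^esub> s \<otimes>\<^bsub>G1\<^esub> inv\<^bsub>G1\<^esub> g \<in> star_ideal G1"
          using normal.inv_op_closed2[OF g1.star_ideal_normal] gz s by blast
        ultimately show "y \<otimes>\<^bsub>G2\<^esub> h \<otimes>\<^bsub>G2\<^esub> inv\<^bsub>G2\<^esub> y \<in> ?Q" by simp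
      qed
      hence "?Q \<lhd> G2" unfolding g2.normal_inv_iff using sgQ by blast
      moreover have "\<forall>x\<in>?Q. \<forall>y\<in>carrier G2. star G2 x y \<in> ?Q \<and> star G2 y x \<in> ?Q"
      proof (intro ballI)
        fix x y assume x: "x \<in> ?Q" and y: "y \<in> carrier G2"
        obtain g z where gz: "g \<in> carrier G1" "z \<in> mla_center G2" "y = mu g \<otimes>\<^bsub>G2\<^esub> z" using cover[OF y] by blast
        obtain s where s: "s \<in> star_ideal G1" "x = mu s" using x by blast
        have sc: "s \<in> carrier G1" using s g1.star_ideal_sub by auto
        have "star G2 x y = mu (star G1 s g)" using g2.star_central_r gz s sc mustar by simp
        moreover have "star G2 y x = mu (star G1 g s)" using g2.star_central_l gz s sc mustar by simp
        moreover have "star G1 s g \<in> star_ideal G1" "star G1 g s \<in> star_ideal G1"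
          using g1.star_ideal_ideal s gz unfolding mla_ideal_def by auto
        ultimately show "star G2 x y \<in> ?Q \<and> star G2 y x \<in> ?Q" by auto
      qed
      ultimately have "mla_ideal G2 ?Q" unfolding mla_ideal_def by blast
      moreover have "{star G2 a b | a b. a \<in> carrier G2 \<and> b \<in> carrier G2} \<subseteq> ?Q"
      proof clarify
        fix a b assume a: "a \<in> carrier G2" and b: "b \<in> carrier G2"
        obtain g z where gz: "g \<in> carrier G1" "z \<in> mla_center G2" "a = mu g \<otimes>\<^bsub>G2\<^esub> z" using cover[OF a] by blast
        obtain g' z' where gz': "g' \<in> carrier G1" "z' \<in> mla_center G2" "b = mu g' \<otimes>\<^bsub>G2\<^esub> z'" using cover[OF b] by blast
        have "star G2 a b = mu (star G1 g g')" using g2.star_central gz gz' mustar by simp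
        thus "star G2 a b \<in> ?Q" using g1.star_in gz gz' by auto
      qed
      ultimately show "star_ideal G2 \<subseteq> ?Q" by (rule g2.star_ideal_least)
    qed
    have D: "mu ` derived G1 (carrier G1) = derived G2 (carrier G2)"
    proof -
      have "derived_set G2 (mu ` carrier G1) = derived_set G2 (carrier G2)"
      proof
        show "derived_set G2 (mu ` carrier G1) \<subseteq> derived_set G2 (carrier G2)"
          by (rule g2.mono_derived_set) auto
      next
        show "derived_set G2 (carrier G2) \<subseteq> derived_set G2 (mu ` carrier G1)"
        proof
          fix x assume "x \<in> derived_set G2 (carrier G2)"
          then obtain a b where a: "a \<in> carrier G2" and b: "b \<in> carrier G2"
            and x: "x = a \<otimes>\<^bsub>G2\<^esub> b \<otimes>\<^bsub>G2\<^esub> inv\<^bsub>G2\<^esub> a \<otimes>\<^bsub>G2\<^esub> inv\<^bsub>G2\<^esub> b" by auto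
          obtain g z where gz: "g \<in> carrier G1" "z \<in> mla_center G2" "a = mu g \<otimes>\<^bsub>G2\<^esub> z" using cover[OF a] by blast
          obtain g' z' where gz': "g' \<in> carrier G1" "z' \<in> mla_center G2" "b = mu g' \<otimes>\<^bsub>G2\<^esub> z'" using cover[OF b] by blast
          have "x = gcomm G2 (mu g) (mu g')" using x g2.gcomm_central[of "mu g" "mu g'" z z'] gz gz'
            unfolding gcomm_def by simp
          thus "x \<in> derived_set G2 (mu ` carrier G1)" unfolding gcomm_def
            by (intro UN_I[of "mu g"] UN_I[of "mu g'"]) (use gz gz' in auto)
        qed
      qed
      thus ?thesis using m.derived_img[of "carrier G1"] unfolding derived_def by simp
    qed
    have img: "mu ` ?M1 = ?M2"
      unfolding mcomm_def
      using set_mult_hom[OF muhom g1.star_ideal_sub g1.derived_in_carrier[OF subset_refl]] S D by simp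
    have bij: "bij_betw (restrict mu ?M1) ?M1 ?M2"
      using inj_on_imp_bij_betw[OF inj] img bij_betw_cong[of ?M1 "restrict mu ?M1" mu] by simp
    have mulp: "restrict mu ?M1 (x \<otimes>\<^bsub>G1\<^esub> y) = restrict mu ?M1 x \<otimes>\<^bsub>G2\<^esub> restrict mu ?M1 y"
      if x: "x \<in> ?M1" and y: "y \<in> ?M1" for x y
    proof -
      have xc: "x \<in> carrier G1" "y \<in> carrier G1" using x y g1.mcomm_sub by auto
      have xy: "x \<otimes>\<^bsub>G1\<^esub> y \<in> ?M1" by (rule subgroup.m_closed[OF g1.mcomm_sg x y])
      have "restrict mu ?M1 (x \<otimes>\<^bsub>G1\<^esub> y) = mu (x \<otimes>\<^bsub>G1\<^esub> y)" using xy by (rule restrict_apply')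
      also have "\<dots> = mu x \<otimes>\<^bsub>G2\<^esub> mu y" using xc by (rule m.hom_mult)
      also have "\<dots> = restrict mu ?M1 x \<otimes>\<^bsub>G2\<^esub> restrict mu ?M1 y" using x y by (simp only: restrict_apply')
      finally show ?thesis .
    qed
    have starp: "restrict mu ?M1 (star G1 x y) = star G2 (restrict mu ?M1 x) (restrict mu ?M1 y)"
      if x: "x \<in> ?M1" and y: "y \<in> ?M1" for x y
    proof -
      have xc: "x \<in> carrier G1" "y \<in> carrier G1" using x y g1.mcomm_sub by auto
      have sm: "star G1 x y \<in> ?M1" using xc by (rule g1.star_mcomm)
      have "restrict mu ?M1 (star G1 x y) = mu (star G1 x y)" using sm by (rule restrict_apply')
      also have "\<dots> = star G2 (mu x) (mu y)" using xc by (rule mustar)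
      also have "\<dots> = star G2 (restrict mu ?M1 x) (restrict mu ?M1 y)" using x y by (simp only: restrict_apply')
      finally show ?thesis .
    qed
    have ops: "mla_iso_on G1 ?M1 G2 ?M2 (restrict mu ?M1)"
      unfolding mla_iso_on_def using bij mulp starp by blast
    have cond: "\<forall>g\<in>carrier G1. \<forall>g'\<in>carrier G1. \<forall>h\<in>carrier G2. \<forall>h'\<in>carrier G2.
        \<beta>2 h = nu (\<beta>1 g) \<longrightarrow> \<beta>2 h' = nu (\<beta>1 g') \<longrightarrow>
        restrict mu ?M1 (gcomm G1 g g') = gcomm G2 h h' \<and> restrict mu ?M1 (star G1 g g') = star G2 h h'"
    proof (intro ballI impI conjI)
      fix g g' h h' assume g: "g \<in> carrier G1" and g': "g' \<in> carrier G1" and h: "h \<in> carrier G2"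
        and h': "h' \<in> carrier G2" and e: "\<beta>2 h = nu (\<beta>1 g)" and e': "\<beta>2 h' = nu (\<beta>1 g')"
      obtain z where z: "z \<in> mla_center G2" "h = mu g \<otimes>\<^bsub>G2\<^esub> z" using fib[OF g h e] by blast
      obtain z' where z': "z' \<in> mla_center G2" "h' = mu g' \<otimes>\<^bsub>G2\<^esub> z'" using fib[OF g' h' e'] by blast
      have "gcomm G2 h h' = gcomm G2 (mu g) (mu g')" using g2.gcomm_central z z' g g' by simp
      also have "\<dots> = mu (gcomm G1 g g')" unfolding gcomm_def using g g' by simp
      finally show "restrict mu ?M1 (gcomm G1 g g') = gcomm G2 h h'" using g1.gcomm_mcomm g g' by simp
      have "star G2 h h' = star G2 (mu g) (mu g')" using g2.star_central z z' g g' by simp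
      also have "\<dots> = mu (star G1 g g')" using mustar g g' by simp
      finally show "restrict mu ?M1 (star G1 g g') = star G2 h h'" using g1.star_mcomm g g' by simp
    qed
    show "isoclinic_morphism G1 K1 \<beta>1 G2 K2 \<beta>2 mu nu"
      unfolding isoclinic_morphism_def isoclinism_def using nuiso ops cond by blast
  qed
qed


end
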